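(* Let $m,n\in\mathbb{N}$, let $\Gamma:\ell^2(\mathbb{R}^n)\to\ell^1(\mathbb{R}^m)$ be linear and bounded, and let $J(u)=\|\Gamma u\|_{\ell^1(\mathbb{R}^m)}$ for $u\in\ell^2(\mathbb{R}^n)$. Let $u_\alpha\in\ell^2(\mathbb{R}^n)$, let $q_\alpha\in\partial\|\cdot\|_{\ell^1(\mathbb{R}^m)}(\Gamma u_\alpha)$ and $p_\alpha=\Gamma^*q_\alpha$. Then for every $u\in\ell^2(\mathbb{R}^n)$, $$\mathrm{ICB}^{q_\alpha}_{\ell^1(\mathbb{R}^m)}(\Gamma u,\Gamma u_\alpha)\le \mathrm{ICB}^{p_\alpha}_J(u,u_\alpha).$$
   Context: $\ell^p(\mathbb{R}^d)$ is the space of sequences $(x_i)_{i\in\mathbb{N}}$, $x_i\in\mathbb{R}^d$, with $\sum_i|x_i|^p<\infty$ ($|\cdot|$ Euclidean norm), and $\|x\|_{\ell^1(\mathbb{R}^m)}=\sum_i|x_i|$. For a convex functional $F$ with $q\in\partial F(w)$, the Bregman distance is $D_F^q(x,w)=F(x)-F(w)-\langle q,x-w\rangle$, and $\mathrm{ICB}^q_F(x,w)=\inf_{z}\big(D_F^q(x-z,w)+D_F^{-q}(z,-w)\big)$, the infimum being over $z$ in the domain space of $F$ (here $\ell^2(\mathbb{R}^n)$ for $F=J$ and $\ell^1(\mathbb{R}^m)$ for $F=\|\cdot\|_{\ell^1(\mathbb{R}^m)}$). *)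

theory Defs
  imports "HOL-Analysis.Analysis"
begin

definition l2 :: "(nat \<Rightarrow> 'a::real_normed_vector) set" where
  "l2 = {x. summable (\<lambda>i. (norm (x i))\<^sup>2)}"

definition l1 :: "(nat \<Rightarrow> 'a::real_normed_vector) set" where
  "l1 = {x. summable (\<lambda>i. norm (x i))}"

definition linf :: "(nat \<Rightarrow> 'a::real_normed_vector) set" where
  "linf = {x. \<exists>B. \<forall>i. norm (x i) \<le> B}"

definition l1_norm :: "(nat \<Rightarrow> 'a::real_normed_vector) \<Rightarrow> real" where
  "l1_norm x = (\<Sum>i. norm (x i))"

definition l2_norm :: "(nat \<Rightarrow> 'a::real_normed_vector) \<Rightarrow> real" where
  "l2_norm x = sqrt (\<Sum>i. (norm (x i))\<^sup>2)"

definition seq_pair :: "(nat \<Rightarrow> 'a::real_inner) \<Rightarrow> (nat \<Rightarrow> 'a) \<Rightarrow> real" where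
  "seq_pair q x = (\<Sum>i. q i \<bullet> x i)"

definition seq_diff :: "(nat \<Rightarrow> 'a::ab_group_add) \<Rightarrow> (nat \<Rightarrow> 'a) \<Rightarrow> nat \<Rightarrow> 'a" where
  "seq_diff x y = (\<lambda>i. x i - y i)"

definition seq_neg :: "(nat \<Rightarrow> 'a::ab_group_add) \<Rightarrow> nat \<Rightarrow> 'a" where
  "seq_neg x = (\<lambda>i. - x i)"

definition bounded_linear_l2_l1 ::
  "((nat \<Rightarrow> 'a::real_normed_vector) \<Rightarrow> (nat \<Rightarrow> 'b::real_normed_vector)) \<Rightarrow> bool" where
  "bounded_linear_l2_l1 G \<longleftrightarrow>
     (\<forall>u\<in>l2. G u \<in> l1) \<and>
     (\<forall>u\<in>l2. \<forall>v\<in>l2. \<forall>a b::real. G (\<lambda>i. a *\<^sub>R u i + b *\<^sub>R v i) = (\<lambda>i. a *\<^sub>R G u i + b *\<^sub>R G v i)) \<and>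
     (\<exists>C. \<forall>u\<in>l2. l1_norm (G u) \<le> C * l2_norm u)"

definition subdiff_l1_norm :: "(nat \<Rightarrow> 'a::real_inner) \<Rightarrow> (nat \<Rightarrow> 'a) set" where
  "subdiff_l1_norm w = {q \<in> linf. \<forall>z\<in>l1. l1_norm z \<ge> l1_norm w + seq_pair q (seq_diff z w)}"

text \<open>p is the image of q under the adjoint of G: the element of ell-2 (identified with its
  dual) with  <p,u> = <q, G u>  for all u in ell-2.\<close>
definition is_adjoint_image ::
  "((nat \<Rightarrow> 'a::real_inner) \<Rightarrow> (nat \<Rightarrow> 'b::real_inner)) \<Rightarrow> (nat \<Rightarrow> 'b) \<Rightarrow> (nat \<Rightarrow> 'a) \<Rightarrow> bool" where
  "is_adjoint_image G q p \<longleftrightarrow> p \<in> l2 \<and> (\<forall>u\<in>l2. seq_pair p u = seq_pair q (G u))"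

definition bregman :: "((nat \<Rightarrow> 'a::real_inner) \<Rightarrow> real) \<Rightarrow> (nat \<Rightarrow> 'a) \<Rightarrow> (nat \<Rightarrow> 'a) \<Rightarrow> (nat \<Rightarrow> 'a) \<Rightarrow> real" where
  "bregman F q x w = F x - F w - seq_pair q (seq_diff x w)"

definition ICB :: "((nat \<Rightarrow> 'a::real_inner) \<Rightarrow> real) \<Rightarrow> (nat \<Rightarrow> 'a) set \<Rightarrow> (nat \<Rightarrow> 'a) \<Rightarrow> (nat \<Rightarrow> 'a) \<Rightarrow> (nat \<Rightarrow> 'a) \<Rightarrow> real" where
  "ICB F D q x w = (INF z\<in>D. bregman F q (seq_diff x z) w + bregman F (seq_neg q) z (seq_neg w))"

end

theory Submission
  imports Defs
begin

lemma l2_lincomb: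
  fixes u v :: "nat \<Rightarrow> 'a::real_normed_vector"
  assumes "u \<in> l2" "v \<in> l2"
  shows "(\<lambda>i. a *\<^sub>R u i + b *\<^sub>R v i) \<in> l2"
proof -
  have su: "summable (\<lambda>i. (norm (u i))\<^sup>2)" and sv: "summable (\<lambda>i. (norm (v i))\<^sup>2)"
    using assms by (auto simp: l2_def)
  have "summable (\<lambda>i. 2*a\<^sup>2 * (norm (u i))\<^sup>2 + 2*b\<^sup>2 * (norm (v i))\<^sup>2)"
    using su sv by (intro summable_add summable_mult) auto
  moreover have "norm ((norm (a *\<^sub>R u i + b *\<^sub>R v i))\<^sup>2) \<le> 2*a\<^sup>2 * (norm (u i))\<^sup>2 + 2*b\<^sup>2 * (norm (v i))\<^sup>2" for i
  proof -
    have t: "norm (a *\<^sub>R u i + b *\<^sub>R v i) \<le> \<bar>a\<bar> * norm (u i) + \<bar>b\<bar> * norm (v i)"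
      by (metis norm_scaleR norm_triangle_ineq)
    have "(norm (a *\<^sub>R u i + b *\<^sub>R v i))\<^sup>2 \<le> (\<bar>a\<bar> * norm (u i) + \<bar>b\<bar> * norm (v i))\<^sup>2"
      using t by (intro power_mono) auto
    also have "\<dots> \<le> 2*a\<^sup>2 * (norm (u i))\<^sup>2 + 2*b\<^sup>2 * (norm (v i))\<^sup>2"
    proof -
      have k: "(x+y)\<^sup>2 \<le> 2*x\<^sup>2 + 2*y\<^sup>2" for x y :: real
      proof -
        have "0 \<le> (x-y)\<^sup>2" by simp
        then show ?thesis by (simp add: power2_eq_square algebra_simps)
      qed
      show ?thesis using k[of "\<bar>a\<bar> * norm (u i)" "\<bar>b\<bar> * norm (v i)"]
        by (simp add: power_mult_distrib)
    qed
    finally show ?thesis by simp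
  qed
  ultimately have "summable (\<lambda>i. (norm (a *\<^sub>R u i + b *\<^sub>R v i))\<^sup>2)"
    by (rule summable_comparison_test'[where N=0])
  then show ?thesis by (simp add: l2_def)
qed

lemma l2_diff: "u \<in> l2 \<Longrightarrow> v \<in> l2 \<Longrightarrow> (\<lambda>i. u i - v i) \<in> l2"
  using l2_lincomb[of u v 1 "-1"] by simp

lemma l2_neg: "u \<in> l2 \<Longrightarrow> (\<lambda>i. - u i) \<in> l2"
  using l2_lincomb[of u u "-1" 0] by simp

lemma l2_add: "u \<in> l2 \<Longrightarrow> v \<in> l2 \<Longrightarrow> (\<lambda>i. u i + v i) \<in> l2"
  using l2_lincomb[of u v 1 1] by simp

lemma pair_neg_aux:
  fixes p z u :: "nat \<Rightarrow> 'a::real_inner"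
  shows "seq_pair (seq_neg p) (seq_diff z (seq_neg u)) = seq_pair p (\<lambda>i. - (z i + u i))"
  unfolding seq_pair_def seq_neg_def seq_diff_def
  apply (rule arg_cong[where f=suminf])
  apply (rule ext)
  by (simp only: diff_minus_eq_add inner_minus_left inner_minus_right)

theorem theorem5:
  fixes G :: "(nat \<Rightarrow> real^'n) \<Rightarrow> (nat \<Rightarrow> real^'m)"
    and u_alpha u :: "nat \<Rightarrow> real^'n"
    and q_alpha :: "nat \<Rightarrow> real^'m"
    and p_alpha :: "nat \<Rightarrow> real^'n"
  assumes "bounded_linear_l2_l1 G"
    and "u_alpha \<in> l2"
    and "q_alpha \<in> subdiff_l1_norm (G u_alpha)"
    and "is_adjoint_image G q_alpha p_alpha"
    and "u \<in> l2"
  shows "ICB l1_norm l1 q_alpha (G u) (G u_alpha)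
           \<le> ICB (\<lambda>v. l1_norm (G v)) l2 p_alpha u u_alpha"
proof -
  note B = assms(1)[unfolded bounded_linear_l2_l1_def]
  have Gl1: "\<And>x. x \<in> l2 \<Longrightarrow> G x \<in> l1" using conjunct1[OF B] by blast
  have lin: "\<And>x y a b. x \<in> l2 \<Longrightarrow> y \<in> l2 \<Longrightarrow>
      G (\<lambda>i. a *\<^sub>R x i + b *\<^sub>R y i) = (\<lambda>i. a *\<^sub>R G x i + b *\<^sub>R G y i)"
    using conjunct1[OF conjunct2[OF B]] by blast
  have Gdiff: "G (\<lambda>i. x i - y i) = (\<lambda>i. G x i - G y i)" if "x \<in> l2" "y \<in> l2" for x y
    using lin[OF that, of 1 "-1"] by simp
  have Gneg: "G (\<lambda>i. - x i) = (\<lambda>i. - G x i)" if "x \<in> l2" for x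
    using lin[OF that that, of "-1" 0] by simp
  have sub: "\<And>z. z \<in> l1 \<Longrightarrow> l1_norm z \<ge> l1_norm (G u_alpha) + seq_pair q_alpha (seq_diff z (G u_alpha))"
    using assms(3) by (auto simp: subdiff_l1_norm_def)
  have adj: "\<And>x. x \<in> l2 \<Longrightarrow> seq_pair p_alpha x = seq_pair q_alpha (G x)"
    using assms(4) by (auto simp: is_adjoint_image_def)
  have l1neg: "(\<lambda>i. - z i) \<in> l1" if "z \<in> l1" for z :: "nat \<Rightarrow> real^'m"
    using that by (simp add: l1_def)
  have nrmneg: "l1_norm (\<lambda>i. - z i) = l1_norm z" for z :: "nat \<Rightarrow> real^'m"
    by (simp add: l1_norm_def)
  define A where "A z = bregman l1_norm q_alpha (seq_diff (G u) z) (G u_alpha) +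
      bregman l1_norm (seq_neg q_alpha) z (seq_neg (G u_alpha))" for z
  have Anonneg: "A z \<ge> 0" if "z \<in> l1" for z
  proof -
    have "G u \<in> l1" using Gl1 assms(5) .
    have d: "seq_diff (G u) z \<in> l1"
    proof -
      have s1: "summable (\<lambda>i. norm (G u i) + norm (z i))"
        using \<open>G u \<in> l1\<close> that unfolding l1_def by (intro summable_add) auto
      have "summable (\<lambda>i. norm (G u i - z i))"
        by (rule summable_comparison_test'[OF s1, where N=0]) (simp add: norm_triangle_ineq4)
      then show ?thesis by (simp add: l1_def seq_diff_def)
    qed
    have 1: "bregman l1_norm q_alpha (seq_diff (G u) z) (G u_alpha) \<ge> 0"
      using sub[OF d] by (simp add: bregman_def)
    have e: "seq_pair (seq_neg q_alpha) (seq_diff z (seq_neg (G u_alpha)))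
        = seq_pair q_alpha (seq_diff (\<lambda>i. - z i) (G u_alpha))"
      unfolding seq_pair_def seq_neg_def seq_diff_def
      by (simp add: inner_diff_right inner_add_right)
    have 2: "bregman l1_norm (seq_neg q_alpha) z (seq_neg (G u_alpha)) \<ge> 0"
      using sub[OF l1neg[OF that]] e nrmneg[of z] nrmneg[of "G u_alpha"]
      by (simp add: bregman_def seq_neg_def)
    show ?thesis using 1 2 by (simp add: A_def)
  qed
  have bdd: "bdd_below (A ` l1)" using Anonneg by (auto intro!: bdd_belowI[where m=0])
  have eq: "A (G z) = bregman (\<lambda>v. l1_norm (G v)) p_alpha (seq_diff u z) u_alpha +
      bregman (\<lambda>v. l1_norm (G v)) (seq_neg p_alpha) z (seq_neg u_alpha)" if z: "z \<in> l2" for z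
  proof -
    have uz: "(\<lambda>i. u i - z i) \<in> l2" using l2_diff[OF assms(5) z] .
    have uzu: "(\<lambda>i. u i - z i - u_alpha i) \<in> l2" using l2_diff[OF uz assms(2)] .
    have zu: "(\<lambda>i. z i + u_alpha i) \<in> l2" using l2_add[OF z assms(2)] .
    have zun: "(\<lambda>i. - (z i + u_alpha i)) \<in> l2" using l2_neg[OF zu] .
    have g1: "G (seq_diff u z) = seq_diff (G u) (G z)"
      unfolding seq_diff_def using Gdiff[OF assms(5) z] .
    have g2: "G (seq_neg u_alpha) = seq_neg (G u_alpha)"
      unfolding seq_neg_def using Gneg[OF assms(2)] .
    have g3: "G (\<lambda>i. u i - z i - u_alpha i) = (\<lambda>i. G u i - G z i - G u_alpha i)"
      using Gdiff[OF uz assms(2)] Gdiff[OF assms(5) z] by simp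
    have g4: "G (\<lambda>i. - (z i + u_alpha i)) = (\<lambda>i. - (G z i + G u_alpha i))"
    proof -
      have "G (\<lambda>i. z i + u_alpha i) = (\<lambda>i. G z i + G u_alpha i)"
        using lin[OF z assms(2), of 1 1] by simp
      then show ?thesis using Gneg[OF zu] by simp
    qed
    have p1: "seq_pair p_alpha (seq_diff (seq_diff u z) u_alpha)
        = seq_pair q_alpha (seq_diff (seq_diff (G u) (G z)) (G u_alpha))"
      unfolding seq_diff_def by (simp only: adj[OF uzu] g3)
    have p2a: "seq_pair (seq_neg p_alpha) (seq_diff z (seq_neg u_alpha))
        = seq_pair p_alpha (\<lambda>i. - (z i + u_alpha i))"
      by (rule pair_neg_aux)
    have p2b: "seq_pair (seq_neg q_alpha) (seq_diff (G z) (seq_neg (G u_alpha)))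
        = seq_pair q_alpha (\<lambda>i. - (G z i + G u_alpha i))"
      by (rule pair_neg_aux)
    have p2: "seq_pair (seq_neg p_alpha) (seq_diff z (seq_neg u_alpha))
        = seq_pair (seq_neg q_alpha) (seq_diff (G z) (seq_neg (G u_alpha)))"
      by (simp only: p2a p2b adj[OF zun] g4)
    show ?thesis unfolding A_def bregman_def by (simp only: g1 g2 p1 p2)
  qed
  have "(INF z\<in>l1. A z) \<le> (INF z\<in>l2. bregman (\<lambda>v. l1_norm (G v)) p_alpha (seq_diff u z) u_alpha +
      bregman (\<lambda>v. l1_norm (G v)) (seq_neg p_alpha) z (seq_neg u_alpha))"
  proof (rule cINF_greatest)
    show "(l2 :: (nat \<Rightarrow> real^'n) set) \<noteq> {}" using assms(2) by blast
  next
    fix z :: "nat \<Rightarrow> real^'n" assume z: "z \<in> l2"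
    have "(INF z\<in>l1. A z) \<le> A (G z)" by (rule cINF_lower[OF bdd Gl1[OF z]])
    then show "(INF z\<in>l1. A z) \<le> bregman (\<lambda>v. l1_norm (G v)) p_alpha (seq_diff u z) u_alpha +
      bregman (\<lambda>v. l1_norm (G v)) (seq_neg p_alpha) z (seq_neg u_alpha)"
      unfolding eq[OF z, symmetric] .
  qed
  then show ?thesis unfolding ICB_def A_def .
qed

end
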